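(* Let $f$ be a positive definite function and let $W=\{w_1,\dots,w_N\}\subset V$ be a norming set for $\mathcal{B}_M$. Let $\mathrm{Q}_Wx=\sum_{k=1}^N\mu_kx(w_k)$ be a quadrature rule (with real weights $\mu_k$) that is exact on $\mathcal{N}_{K_f,W}$, i.e. $\frac1n\sum_{i=1}^n y(v_i)=\mathrm{Q}_Wy$ for all $y\in\mathcal{N}_{K_f,W}$. Then for every $x\in\mathcal{L}(G)$, $$\Big|\frac1n\sum_{i=1}^nx(v_i)-\mathrm{Q}_Wx\Big|\le\big(1+\|(\mathbf{S}_W\mathbf{B}_M)^{-1}\|\big)\Big(\sum_{k=M+1}^n\hat{f}_k\Big)^{1/2}\|x\|_{K_f}.$$
   Context: Let $G$ be a graph with vertex set $V=\{v_1,\dots,v_n\}$, symmetric non-negative weighted adjacency matrix $\mathbf{A}$, degree matrix $\mathbf{D}=\mathrm{diag}(\sum_k\mathbf{A}_{ik})$ (positive), and normalized Laplacian $\mathbf{L}=\mathbf{I}_n-\mathbf{D}^{-1/2}\mathbf{A}\mathbf{D}^{-1/2}$. Signals are vectors in $\mathcal{L}(G)\cong\mathbb{R}^n$ with euclidean norm and standard basis $e_1,\dots,e_n$. Fix an orthonormal eigendecomposition $\mathbf{L}=\mathbf{U}\,\mathrm{diag}(\lambda_1,\dots,\lambda_n)\mathbf{U}^\intercal$ with columns $u_1,\dots,u_n$. Fourier transform $\hat{x}=\mathbf{U}^\intercal x$; convolution operator $\mathbf{C}_x=\mathbf{U}\,\mathrm{diag}(\hat{x})\mathbf{U}^\intercal$.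 For $f\in\mathcal{L}(G)$ let $(\mathbf{K}_f)_{ij}=(\mathbf{C}_{e_j}f)(v_i)$; $f$ is a positive definite function if $\mathbf{K}_f$ is symmetric strictly positive definite; then $\|x\|_{K_f}=\sqrt{x^\intercal\mathbf{K}_f^{-1}x}$. For distinct nodes $w_k=v_{j_k}$, $\mathcal{N}_{K_f,W}=\mathrm{span}\{\mathbf{C}_{e_{j_1}}f,\dots,\mathbf{C}_{e_{j_N}}f\}$. Let $\mathcal{B}_M=\mathrm{span}\{u_1,\dots,u_M\}$, $\mathbf{S}_Wx(v)=x(v)$ for $v\in W$ and $0$ otherwise, $\mathbf{B}_Mx=\sum_{k=1}^M(u_k^\intercal x)u_k$. $W$ is a norming set for $\mathcal{B}_M$ if $\mathbf{S}_W\mathbf{B}_M$ is injective on $\mathcal{B}_M$; $\|(\mathbf{S}_W\mathbf{B}_M)^{-1}\|$ is the euclidean operator norm of the inverse of $\mathbf{S}_W\mathbf{B}_M|_{\mathcal{B}_M}$ on its image $\mathbf{S}_W(\mathcal{B}_M)$. *)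

theory Defs
  imports "Jordan_Normal_Form.Matrix"
begin

text \<open>Vertices v_1..v_n are identified with indices 0..n-1; signals are vectors in carrier_vec n.
  The eigenvector u_(k+1) of the paper is column k of U (0-based).\<close>

definition degree :: "real mat \<Rightarrow> nat \<Rightarrow> real" where
  "degree A i = (\<Sum>k<dim_col A. A $$ (i, k))"

definition norm_laplacian :: "real mat \<Rightarrow> real mat" where
  "norm_laplacian A = 1\<^sub>m (dim_row A) -
     mat (dim_row A) (dim_row A) (\<lambda>(i,j). A $$ (i,j) / (sqrt (degree A i) * sqrt (degree A j)))"

definition diag_of :: "nat \<Rightarrow> (nat \<Rightarrow> real) \<Rightarrow> real mat" where
  "diag_of n d = mat n n (\<lambda>(i,j). if i = j then d i else 0)"

definition vnorm :: "real vec \<Rightarrow> real" where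
  "vnorm v = sqrt (scalar_prod v v)"

definition gft :: "real mat \<Rightarrow> real vec \<Rightarrow> real vec" where
  "gft U x = mult_mat_vec (transpose_mat U) x"

definition conv_op :: "real mat \<Rightarrow> real vec \<Rightarrow> real mat" where
  "conv_op U x = U * diag_of (dim_row U) (\<lambda>k. gft U x $ k) * transpose_mat U"

definition kernel_mat :: "real mat \<Rightarrow> real vec \<Rightarrow> real mat" where
  "kernel_mat U f = mat (dim_row U) (dim_row U)
     (\<lambda>(i,j). (mult_mat_vec (conv_op U (unit_vec (dim_row U) j)) f) $ i)"

definition pos_def_mat :: "nat \<Rightarrow> real mat \<Rightarrow> bool" where
  "pos_def_mat n K \<longleftrightarrow> K \<in> carrier_mat n n \<and> transpose_mat K = K \<and>
     (\<forall>x \<in> carrier_vec n. x \<noteq> 0\<^sub>v n \<longrightarrow> scalar_prod x (mult_mat_vec (K) x) > 0)"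

definition pos_def_fun :: "real mat \<Rightarrow> real vec \<Rightarrow> bool" where
  "pos_def_fun U f \<longleftrightarrow> pos_def_mat (dim_row U) (kernel_mat U f)"

definition mat_inv :: "nat \<Rightarrow> real mat \<Rightarrow> real mat" where
  "mat_inv n K = (SOME B. B \<in> carrier_mat n n \<and> K * B = 1\<^sub>m n \<and> B * K = 1\<^sub>m n)"

definition native_norm :: "real mat \<Rightarrow> real vec \<Rightarrow> real vec \<Rightarrow> real" where
  "native_norm U f x = sqrt (scalar_prod x (mult_mat_vec (mat_inv (dim_row U) (kernel_mat U f)) x))"

text \<open>Nodes w_k = v_(j k), k < N.\<close>
definition native_span :: "real mat \<Rightarrow> real vec \<Rightarrow> nat \<Rightarrow> (nat \<Rightarrow> nat) \<Rightarrow> real vec set" where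
  "native_span U f N j = {vec (dim_row U) (\<lambda>i. \<Sum>k<N. c k * (mult_mat_vec (conv_op U (unit_vec (dim_row U) (j k))) f) $ i)
       | c. True}"

definition bandlimited :: "real mat \<Rightarrow> nat \<Rightarrow> real vec set" where
  "bandlimited U M = {vec (dim_row U) (\<lambda>i. \<Sum>k<M. c k * U $$ (i, k)) | c. True}"

definition sampling_op :: "nat \<Rightarrow> (nat \<Rightarrow> nat) \<Rightarrow> real vec \<Rightarrow> real vec" where
  "sampling_op N j x = vec (dim_vec x) (\<lambda>i. if i \<in> j ` {..<N} then x $ i else 0)"

definition bl_proj :: "real mat \<Rightarrow> nat \<Rightarrow> real vec \<Rightarrow> real vec" where
  "bl_proj U M x = vec (dim_row U) (\<lambda>i. \<Sum>k<M. scalar_prod (col U k) x * U $$ (i, k))"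

definition SB_op :: "real mat \<Rightarrow> nat \<Rightarrow> nat \<Rightarrow> (nat \<Rightarrow> nat) \<Rightarrow> real vec \<Rightarrow> real vec" where
  "SB_op U M N j x = sampling_op N j (bl_proj U M x)"

definition norming_set :: "real mat \<Rightarrow> nat \<Rightarrow> nat \<Rightarrow> (nat \<Rightarrow> nat) \<Rightarrow> bool" where
  "norming_set U M N j \<longleftrightarrow> inj_on (SB_op U M N j) (bandlimited U M)"

text \<open>Euclidean operator norm of the inverse of S_W B_M restricted to B_M, on its image S_W(B_M)
  (0 if the image is the zero space).\<close>
definition SB_inv_norm :: "real mat \<Rightarrow> nat \<Rightarrow> nat \<Rightarrow> (nat \<Rightarrow> nat) \<Rightarrow> real" where
  "SB_inv_norm U M N j =
     (let T = SB_op U M N j; B = bandlimited U M; Ti = inv_into B T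
      in Sup (insert 0 {vnorm (Ti z) / vnorm z | z. z \<in> T ` B \<and> z \<noteq> 0\<^sub>v (dim_row U)}))"

end

theory Submission
  imports Defs "Jordan_Normal_Form.Determinant"
begin

lemma diag_conj_index:
  assumes U: "U \<in> carrier_mat n n" and i: "i < n" and l: "l < n"
  shows "(U * diag_of n d * transpose_mat U) $$ (i,l) = (\<Sum>k<n. U $$ (i,k) * d k * U $$ (l,k))"
proof -
  have "(U * diag_of n d) $$ (i,k) = U $$ (i,k) * d k" if "k < n" for k
    using U i that unfolding diag_of_def
    by (simp add: scalar_prod_def index_mult_mat row_def col_def if_distrib sum.delta' cong: if_cong)
  then show ?thesis using U i l unfolding diag_of_def
    by (simp add: index_mult_mat scalar_prod_def row_def col_def lessThan_atLeast0)
qed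

lemma my_CS:
  fixes a b :: "nat \<Rightarrow> real"
  shows "(\<Sum>i\<in>I. a i * b i)\<^sup>2 \<le> (\<Sum>i\<in>I. (a i)\<^sup>2) * (\<Sum>i\<in>I. (b i)\<^sup>2)"
proof -
  have "0 \<le> (\<Sum>i\<in>I. \<Sum>j\<in>I. (a i * b j - a j * b i)\<^sup>2)" by (intro sum_nonneg) simp
  also have "\<dots> = (\<Sum>i\<in>I. \<Sum>j\<in>I. (a i)\<^sup>2 * (b j)\<^sup>2 + (a j)\<^sup>2 * (b i)\<^sup>2 - 2 * ((a i * b i) * (a j * b j)))"
    by (intro sum.cong refl) (simp add: power2_eq_square algebra_simps)
  also have "\<dots> = (\<Sum>i\<in>I. \<Sum>j\<in>I. (a i)\<^sup>2 * (b j)\<^sup>2) + (\<Sum>i\<in>I. \<Sum>j\<in>I. (a j)\<^sup>2 * (b i)\<^sup>2)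
      - 2 * (\<Sum>i\<in>I. \<Sum>j\<in>I. (a i * b i) * (a j * b j))"
    by (simp only: sum_subtractf sum.distrib sum_distrib_left)
  also have "(\<Sum>i\<in>I. \<Sum>j\<in>I. (a i)\<^sup>2 * (b j)\<^sup>2) = (\<Sum>i\<in>I. (a i)\<^sup>2) * (\<Sum>i\<in>I. (b i)\<^sup>2)"
    by (simp add: sum_product)
  also have "(\<Sum>i\<in>I. \<Sum>j\<in>I. (a j)\<^sup>2 * (b i)\<^sup>2) = (\<Sum>i\<in>I. (a i)\<^sup>2) * (\<Sum>i\<in>I. (b i)\<^sup>2)"
    by (subst sum.swap) (simp add: sum_product mult.commute)
  also have "(\<Sum>i\<in>I. \<Sum>j\<in>I. (a i * b i) * (a j * b j)) = (\<Sum>i\<in>I. a i * b i)\<^sup>2"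
    by (simp add: sum_product power2_eq_square)
  finally show ?thesis by simp
qed

lemma lin_indep_bound:
  fixes a :: "nat \<Rightarrow> nat \<Rightarrow> real"
  assumes indep: "\<And>c. (\<forall>i<n. (\<Sum>k<M. c k * a k i) = 0) \<Longrightarrow> (\<forall>k<M. c k = 0)"
  shows "\<exists>C\<ge>0. \<forall>c. (\<Sum>k<M. (c k)\<^sup>2) \<le> C * (\<Sum>i<n. (\<Sum>k<M. c k * a k i)\<^sup>2)"
proof -
  define G where "G = mat M M (\<lambda>(k,l). \<Sum>i<n. a k i * a l i)"
  have G: "G \<in> carrier_mat M M" unfolding G_def by simp
  have Gv: "(G *\<^sub>v v) $ l = (\<Sum>i<n. a l i * (\<Sum>m<M. v $ m * a m i))"
    if l: "l < M" and v: "v \<in> carrier_vec M" for l v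
  proof -
    have "(G *\<^sub>v v) $ l = (\<Sum>m<M. (\<Sum>i<n. a l i * a m i) * v $ m)"
      using l v by (simp add: G_def scalar_prod_def row_def lessThan_atLeast0)
    also have "\<dots> = (\<Sum>m<M. \<Sum>i<n. a l i * (v $ m * a m i))"
      unfolding sum_distrib_right by (simp add: mult_ac)
    also have "\<dots> = (\<Sum>i<n. a l i * (\<Sum>m<M. v $ m * a m i))"
      by (subst sum.swap) (simp add: sum_distrib_left)
    finally show ?thesis .
  qed
  have "det G \<noteq> 0"
  proof
    assume "det G = 0"
    then obtain v where v: "v \<in> carrier_vec M" "v \<noteq> 0\<^sub>v M" "G *\<^sub>v v = 0\<^sub>v M"
      using det_0_iff_vec_prod_zero[OF G] by auto
    define y where "y i = (\<Sum>m<M. v $ m * a m i)" for i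
    have "0 = (\<Sum>l<M. v $ l * (G *\<^sub>v v) $ l)" using v(3) by simp
    also have "\<dots> = (\<Sum>l<M. \<Sum>i<n. v $ l * a l i * y i)"
      using Gv[OF _ v(1)] by (simp add: y_def sum_distrib_left mult_ac)
    also have "\<dots> = (\<Sum>i<n. (y i)\<^sup>2)"
      by (subst sum.swap) (simp add: y_def power2_eq_square sum_distrib_right mult_ac)
    finally have "(\<Sum>i<n. (y i)\<^sup>2) = 0" by simp
    then have "\<forall>i<n. y i = 0" by (simp add: sum_nonneg_eq_0_iff)
    then have "\<forall>k<M. v $ k = 0" using indep[of "\<lambda>k. v $ k"] by (simp add: y_def)
    then have "v = 0\<^sub>v M" using v(1) by (intro eq_vecI) auto
    with v(2) show False by simp
  qed
  from det_non_zero_imp_unit[OF G this, of undefined]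
  obtain B where B: "B \<in> carrier_mat M M" and BG: "B * G = 1\<^sub>m M"
    unfolding Units_def ring_mat_def by auto
  define L where "L k i = (\<Sum>l<M. B $$ (k,l) * a l i)" for k i
  define C where "C = (\<Sum>k<M. \<Sum>i<n. (L k i)\<^sup>2)"
  have "C \<ge> 0" unfolding C_def by (intro sum_nonneg) simp
  moreover have "(\<Sum>k<M. (c k)\<^sup>2) \<le> C * (\<Sum>i<n. (\<Sum>k<M. c k * a k i)\<^sup>2)" for c
  proof -
    define y where "y i = (\<Sum>m<M. c m * a m i)" for i
    define cv where "cv = vec M c"
    have cv: "cv \<in> carrier_vec M" unfolding cv_def by simp
    have ck: "c k = (\<Sum>i<n. L k i * y i)" if k: "k < M" for k
    proof -
      have "c k = ((B * G) *\<^sub>v cv) $ k" using BG cv k by (simp add: cv_def)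
      also have "\<dots> = (B *\<^sub>v (G *\<^sub>v cv)) $ k" using B G cv by simp
      also have "\<dots> = (\<Sum>l<M. B $$ (k,l) * (G *\<^sub>v cv) $ l)"
        using B G k by (simp add: scalar_prod_def row_def lessThan_atLeast0)
      also have "\<dots> = (\<Sum>l<M. \<Sum>i<n. B $$ (k,l) * (a l i * y i))"
        using Gv[OF _ cv] by (simp add: cv_def y_def sum_distrib_left)
      also have "\<dots> = (\<Sum>i<n. L k i * y i)"
        unfolding L_def sum_distrib_right by (subst sum.swap) (simp add: mult_ac)
      finally show ?thesis .
    qed
    have "(\<Sum>k<M. (c k)\<^sup>2) \<le> (\<Sum>k<M. (\<Sum>i<n. (L k i)\<^sup>2) * (\<Sum>i<n. (y i)\<^sup>2))"
      using ck my_CS by (intro sum_mono) simp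
    also have "\<dots> = C * (\<Sum>i<n. (y i)\<^sup>2)" by (simp add: C_def sum_distrib_right)
    finally show ?thesis by (simp add: y_def)
  qed
  ultimately show ?thesis by blast
qed

lemma sum_if_less:
  fixes M n :: nat
  assumes "M \<le> n"
  shows "(\<Sum>m<n. if m < M then f m else (0::real)) = (\<Sum>m<M. f m)"
proof -
  have e: "{..<n} \<inter> {m. m < M} = {..<M}" using assms by auto
  show ?thesis by (simp add: sum.If_cases e)
qed

lemma sum_if_ge:
  fixes M n :: nat
  shows "(\<Sum>m<n. if M \<le> m then f m else (0::real)) = (\<Sum>m\<in>{M..<n}. f m)"
proof -
  have e: "{..<n} \<inter> {m. M \<le> m} = {M..<n}" by auto
  show ?thesis by (simp add: sum.If_cases e)
qed

lemma vnorm_vec: "vnorm (vec n g) = sqrt (\<Sum>i<n. (g i)\<^sup>2)"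
  by (simp add: vnorm_def scalar_prod_def lessThan_atLeast0 power2_eq_square)

lemma vnorm_pos:
  assumes z: "z \<in> carrier_vec n" and nz: "z \<noteq> 0\<^sub>v n"
  shows "vnorm z > 0"
proof -
  have zz: "z = vec n (\<lambda>i. z $ i)" using z by (intro eq_vecI) auto
  have "(\<Sum>i<n. (z $ i)\<^sup>2) \<noteq> 0"
  proof
    assume "(\<Sum>i<n. (z $ i)\<^sup>2) = 0"
    then have "\<forall>i<n. z $ i = 0" by (simp add: sum_nonneg_eq_0_iff)
    then have "z = 0\<^sub>v n" using z by (intro eq_vecI) auto
    with nz show False by simp
  qed
  moreover have "(\<Sum>i<n. (z $ i)\<^sup>2) \<ge> 0" by (intro sum_nonneg) simp
  ultimately have "(\<Sum>i<n. (z $ i)\<^sup>2) > 0" by linarith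
  then show ?thesis by (subst zz) (simp add: vnorm_vec)
qed

locale orthU =
  fixes n :: nat and U :: "real mat"
  assumes U: "U \<in> carrier_mat n n" and orth: "transpose_mat U * U = 1\<^sub>m n"
begin

definition hat :: "(nat \<Rightarrow> real) \<Rightarrow> nat \<Rightarrow> real" where
  "hat x k = (\<Sum>i<n. U $$ (i,k) * x i)"

lemma orth_sum: "k < n \<Longrightarrow> l < n \<Longrightarrow> (\<Sum>i<n. U $$ (i,k) * U $$ (i,l)) = (if k = l then 1 else 0)"
proof -
  assume k: "k < n" and l: "l < n"
  have "(transpose_mat U * U) $$ (k,l) = (if k = l then 1 else 0)" using orth k l by simp
  moreover have "(transpose_mat U * U) $$ (k,l) = (\<Sum>i<n. U $$ (i,k) * U $$ (i,l))"
    using U k l by (simp add: index_mult_mat scalar_prod_def row_def col_def lessThan_atLeast0)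
  ultimately show ?thesis by simp
qed

lemma compl_sum: "i < n \<Longrightarrow> l < n \<Longrightarrow> (\<Sum>k<n. U $$ (i,k) * U $$ (l,k)) = (if i = l then 1 else 0)"
proof -
  assume i: "i < n" and l: "l < n"
  have UUt: "U * transpose_mat U = 1\<^sub>m n"
    by (rule mat_mult_left_right_inverse[OF _ U orth]) (use U in auto)
  have "(U * transpose_mat U) $$ (i,l) = (if i = l then 1 else 0)" using UUt i l by simp
  moreover have "(U * transpose_mat U) $$ (i,l) = (\<Sum>k<n. U $$ (i,k) * U $$ (l,k))"
    using U i l by (simp add: index_mult_mat scalar_prod_def row_def col_def lessThan_atLeast0)
  ultimately show ?thesis by simp
qed

lemma hat_synth:
  assumes y: "\<forall>i<n. y i = (\<Sum>m<n. U $$ (i,m) * c m)" and k: "k < n"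
  shows "hat y k = c k"
proof -
  have "hat y k = (\<Sum>i<n. \<Sum>m<n. U $$ (i,k) * (U $$ (i,m) * c m))"
    unfolding hat_def using y by (simp add: sum_distrib_left)
  also have "\<dots> = (\<Sum>m<n. c m * (\<Sum>i<n. U $$ (i,k) * U $$ (i,m)))"
    by (subst sum.swap) (simp add: sum_distrib_left mult_ac)
  also have "\<dots> = (\<Sum>m<n. c m * (if k = m then 1 else 0))"
    using k by (intro sum.cong) (simp_all add: orth_sum)
  also have "\<dots> = c k" using k by (simp add: if_distrib sum.delta cong: if_cong)
  finally show ?thesis .
qed

lemma inversion: "i < n \<Longrightarrow> (\<Sum>k<n. U $$ (i,k) * hat x k) = x i"
proof -
  assume i: "i < n"
  have "(\<Sum>k<n. U $$ (i,k) * hat x k) = (\<Sum>k<n. \<Sum>l<n. U $$ (i,k) * (U $$ (l,k) * x l))"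
    unfolding hat_def by (simp add: sum_distrib_left)
  also have "\<dots> = (\<Sum>l<n. x l * (\<Sum>k<n. U $$ (i,k) * U $$ (l,k)))"
    by (subst sum.swap) (simp add: sum_distrib_left mult_ac)
  also have "\<dots> = (\<Sum>l<n. x l * (if i = l then 1 else 0))"
    using i by (intro sum.cong) (simp_all add: compl_sum)
  also have "\<dots> = x i" using i by (simp add: if_distrib sum.delta cong: if_cong)
  finally show ?thesis .
qed

lemma parseval: "(\<Sum>i<n. x i * y i) = (\<Sum>k<n. hat x k * hat y k)"
proof -
  have "(\<Sum>k<n. hat x k * hat y k) = (\<Sum>k<n. \<Sum>i<n. hat x k * (U $$ (i,k) * y i))"
    unfolding hat_def[of y] by (simp add: sum_distrib_left)
  also have "\<dots> = (\<Sum>i<n. y i * (\<Sum>k<n. U $$ (i,k) * hat x k))"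
    by (subst sum.swap) (simp add: sum_distrib_left mult_ac)
  also have "\<dots> = (\<Sum>i<n. y i * x i)"
    by (intro sum.cong) (simp_all add: inversion)
  finally show ?thesis by (simp add: mult_ac)
qed


definition Mg :: "(nat \<Rightarrow> real) \<Rightarrow> real mat" where
  "Mg g = mat n n (\<lambda>(i,l). \<Sum>k<n. U $$ (i,k) * U $$ (l,k) * g k)"

lemma Mg_carrier[simp]: "Mg g \<in> carrier_mat n n" unfolding Mg_def by simp
lemma Mg_dims[simp]: "dim_row (Mg g) = n" "dim_col (Mg g) = n" unfolding Mg_def by simp_all

lemma Mg_vec:
  assumes i: "i < n" and x: "x \<in> carrier_vec n"
  shows "(Mg g *\<^sub>v x) $ i = (\<Sum>k<n. U $$ (i,k) * g k * hat (\<lambda>l. x $ l) k)"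
proof -
  have "(Mg g *\<^sub>v x) $ i = (\<Sum>l<n. (\<Sum>k<n. U $$ (i,k) * U $$ (l,k) * g k) * x $ l)"
    using i x by (simp add: Mg_def scalar_prod_def row_def lessThan_atLeast0)
  also have "\<dots> = (\<Sum>l<n. \<Sum>k<n. U $$ (i,k) * g k * (U $$ (l,k) * x $ l))"
    unfolding sum_distrib_right by (simp add: mult_ac)
  also have "\<dots> = (\<Sum>k<n. U $$ (i,k) * g k * hat (\<lambda>l. x $ l) k)"
    by (subst sum.swap) (simp add: hat_def sum_distrib_left)
  finally show ?thesis .
qed

lemma Mg_mult: "Mg g * Mg h = Mg (\<lambda>k. g k * h k)"
proof (rule eq_matI)
  fix i l assume i: "i < dim_row (Mg (\<lambda>k. g k * h k))" and l: "l < dim_col (Mg (\<lambda>k. g k * h k))"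
  then have i: "i < n" and l: "l < n" by simp_all
  have cl: "col (Mg h) l \<in> carrier_vec n" using col_dim[of "Mg h" l] by simp
  have hc: "hat (\<lambda>m. col (Mg h) l $ m) k = U $$ (l,k) * h k" if "k < n" for k
    by (rule hat_synth[OF _ that]) (use l in \<open>simp add: Mg_def mult_ac\<close>)
  have "(Mg g * Mg h) $$ (i,l) = (Mg g *\<^sub>v col (Mg h) l) $ i"
    using i l by simp
  also have "\<dots> = (\<Sum>k<n. U $$ (i,k) * g k * hat (\<lambda>m. col (Mg h) l $ m) k)"
    by (rule Mg_vec[OF i cl])
  also have "\<dots> = (\<Sum>k<n. U $$ (i,k) * g k * (U $$ (l,k) * h k))"
    by (intro sum.cong refl) (simp only: hc lessThan_iff)
  also have "\<dots> = Mg (\<lambda>k. g k * h k) $$ (i,l)"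
    using i l by (simp add: Mg_def mult_ac)
  finally show "(Mg g * Mg h) $$ (i,l) = Mg (\<lambda>k. g k * h k) $$ (i,l)" .
qed simp_all

lemma Mg_one: "Mg (\<lambda>_. 1) = 1\<^sub>m n"
  by (rule eq_matI) (simp_all add: Mg_def compl_sum)

lemma kernel_Mg:
  assumes f: "f \<in> carrier_vec n"
  shows "kernel_mat U f = Mg (hat (\<lambda>i. f $ i))"
proof -
  have dU: "dim_row U = n" using U by simp
  have conv: "conv_op U (unit_vec n l) = Mg (\<lambda>k. U $$ (l,k))" if l: "l < n" for l
  proof -
    have g: "gft U (unit_vec n l) $ k = U $$ (l,k)" if "k < n" for k
      using U l that by (simp add: gft_def scalar_prod_def row_def unit_vec_def
          lessThan_atLeast0 if_distrib sum.delta cong: if_cong)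
    show ?thesis
      unfolding conv_op_def dU
    proof (rule eq_matI)
      fix i m assume "i < dim_row (Mg (\<lambda>k. U $$ (l, k)))" "m < dim_col (Mg (\<lambda>k. U $$ (l, k)))"
      then have i: "i < n" and m: "m < n" by simp_all
      show "(U * diag_of n (\<lambda>k. gft U (unit_vec n l) $ k) * U\<^sup>T) $$ (i, m) = Mg (\<lambda>k. U $$ (l, k)) $$ (i, m)"
        using diag_conj_index[OF U i m] g i m by (simp add: Mg_def mult_ac)
    qed (use U in \<open>simp_all add: diag_of_def\<close>)
  qed
  show ?thesis
  proof (rule eq_matI)
    fix i l assume "i < dim_row (Mg (hat (\<lambda>i. f $ i)))" "l < dim_col (Mg (hat (\<lambda>i. f $ i)))"
    then have i: "i < n" and l: "l < n" by simp_all
    have "kernel_mat U f $$ (i,l) = (Mg (\<lambda>k. U $$ (l,k)) *\<^sub>v f) $ i"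
      using i l dU conv[OF l] by (simp add: kernel_mat_def)
    also have "\<dots> = (\<Sum>k<n. U $$ (i,k) * U $$ (l,k) * hat (\<lambda>i. f $ i) k)"
      by (subst Mg_vec[OF i f]) simp
    also have "\<dots> = Mg (hat (\<lambda>i. f $ i)) $$ (i,l)"
      using i l by (simp add: Mg_def)
    finally show "kernel_mat U f $$ (i,l) = Mg (hat (\<lambda>i. f $ i)) $$ (i,l)" .
  qed (use U in \<open>simp_all add: kernel_mat_def\<close>)
qed


lemma Mg_cong: "(\<And>k. k < n \<Longrightarrow> g k = h k) \<Longrightarrow> Mg g = Mg h"
  unfolding Mg_def by (intro eq_matI) auto

lemma Mg_quad:
  assumes x: "x \<in> carrier_vec n"
  shows "x \<bullet> (Mg g *\<^sub>v x) = (\<Sum>k<n. g k * (hat (\<lambda>l. x $ l) k)\<^sup>2)"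
proof -
  have "x \<bullet> (Mg g *\<^sub>v x) = (\<Sum>i<n. x $ i * (Mg g *\<^sub>v x) $ i)"
    using x by (simp add: scalar_prod_def lessThan_atLeast0)
  also have "\<dots> = (\<Sum>i<n. x $ i * (\<Sum>k<n. U $$ (i,k) * g k * hat (\<lambda>l. x $ l) k))"
  proof (intro sum.cong refl)
    fix i assume "i \<in> {..<n}"
    then show "x $ i * (Mg g *\<^sub>v x) $ i = x $ i * (\<Sum>k<n. U $$ (i,k) * g k * hat (\<lambda>l. x $ l) k)"
      using Mg_vec[OF _ x, of i g] by (simp del: index_mult_mat_vec)
  qed
  also have "\<dots> = (\<Sum>i<n. \<Sum>k<n. g k * hat (\<lambda>l. x $ l) k * (U $$ (i,k) * x $ i))"
    unfolding sum_distrib_left by (intro sum.cong refl) (simp add: mult_ac)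
  also have "\<dots> = (\<Sum>k<n. \<Sum>i<n. g k * hat (\<lambda>l. x $ l) k * (U $$ (i,k) * x $ i))"
    by (rule sum.swap)
  also have "\<dots> = (\<Sum>k<n. g k * (hat (\<lambda>l. x $ l) k)\<^sup>2)"
  proof (intro sum.cong refl)
    fix k
    have "(\<Sum>i<n. g k * hat (\<lambda>l. x $ l) k * (U $$ (i,k) * x $ i))
        = g k * hat (\<lambda>l. x $ l) k * (\<Sum>i<n. U $$ (i,k) * x $ i)"
      by (simp add: sum_distrib_left)
    also have "(\<Sum>i<n. U $$ (i,k) * x $ i) = hat (\<lambda>l. x $ l) k" by (simp add: hat_def)
    finally show "(\<Sum>i<n. g k * hat (\<lambda>l. x $ l) k * (U $$ (i,k) * x $ i)) = g k * (hat (\<lambda>l. x $ l) k)\<^sup>2"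
      by (simp add: power2_eq_square)
  qed
  finally show ?thesis .
qed

lemma mat_inv_Mg:
  assumes g: "\<And>k. k < n \<Longrightarrow> g k \<noteq> 0"
  shows "mat_inv n (Mg g) = Mg (\<lambda>k. 1 / g k)"
proof -
  let ?B = "Mg (\<lambda>k. 1 / g k)"
  have e1: "Mg (\<lambda>k. g k * (1 / g k)) = Mg (\<lambda>_. 1)" by (rule Mg_cong) (simp add: g)
  have e2: "Mg (\<lambda>k. 1 / g k * g k) = Mg (\<lambda>_. 1)" by (rule Mg_cong) (simp add: g)
  have AB: "Mg g * ?B = 1\<^sub>m n" using e1 by (simp only: Mg_mult Mg_one)
  have BA: "?B * Mg g = 1\<^sub>m n" using e2 by (simp only: Mg_mult Mg_one)
  have ex: "\<exists>B. B \<in> carrier_mat n n \<and> Mg g * B = 1\<^sub>m n \<and> B * Mg g = 1\<^sub>m n"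
    using AB BA by (intro exI[of _ ?B]) simp
  define B' where "B' = mat_inv n (Mg g)"
  have B': "B' \<in> carrier_mat n n" "Mg g * B' = 1\<^sub>m n" "B' * Mg g = 1\<^sub>m n"
    using someI_ex[OF ex] unfolding B'_def mat_inv_def by blast+
  have "B' = B' * (Mg g * ?B)" using AB B'(1) by simp
  also have "\<dots> = (B' * Mg g) * ?B" using assoc_mult_mat[OF B'(1) Mg_carrier Mg_carrier] by simp
  also have "\<dots> = ?B" using B'(3) by simp
  finally show ?thesis unfolding B'_def .
qed


lemma dU[simp]: "dim_row U = n" "dim_col U = n" using U by auto

lemma hat_cong: "(\<And>i. i < n \<Longrightarrow> x i = y i) \<Longrightarrow> hat x k = hat y k"
  unfolding hat_def by (intro sum.cong) auto

lemma bl_hat: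
  assumes M: "M \<le> n" and k: "k < n"
  shows "hat (\<lambda>i. \<Sum>m<M. c m * U $$ (i,m)) k = (if k < M then c k else 0)"
proof (rule hat_synth[OF _ k], intro allI impI)
  fix i assume "i < n"
  have "(\<Sum>m<n. U $$ (i,m) * (if m < M then c m else 0)) = (\<Sum>m<n. if m < M then c m * U $$ (i,m) else 0)"
    by (intro sum.cong) auto
  also have "\<dots> = (\<Sum>m<M. c m * U $$ (i,m))" by (rule sum_if_less[OF M])
  finally show "(\<Sum>m<M. c m * U $$ (i,m)) = (\<Sum>m<n. U $$ (i,m) * (if m < M then c m else 0))" by simp
qed

lemma bl_proj_id:
  assumes M: "M \<le> n"
  shows "bl_proj U M (vec n (\<lambda>i. \<Sum>m<M. c m * U $$ (i,m))) = vec n (\<lambda>i. \<Sum>m<M. c m * U $$ (i,m))"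
proof (rule eq_vecI)
  fix i assume "i < dim_vec (vec n (\<lambda>i. \<Sum>m<M. c m * U $$ (i,m)))"
  then have i: "i < n" by simp
  have cp: "col U k \<bullet> vec n (\<lambda>i. \<Sum>m<M. c m * U $$ (i,m)) = c k" if k: "k < M" for k
  proof -
    have "col U k \<bullet> vec n (\<lambda>i. \<Sum>m<M. c m * U $$ (i,m)) = hat (\<lambda>i. \<Sum>m<M. c m * U $$ (i,m)) k"
      using k M by (simp add: scalar_prod_def hat_def lessThan_atLeast0)
    also have "\<dots> = c k" using bl_hat[OF M, of k c] k M by simp
    finally show ?thesis .
  qed
  show "bl_proj U M (vec n (\<lambda>i. \<Sum>m<M. c m * U $$ (i,m))) $ i = vec n (\<lambda>i. \<Sum>m<M. c m * U $$ (i,m)) $ i"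
    using i cp by (simp add: bl_proj_def)
qed (simp add: bl_proj_def)

lemma SB_op_bl:
  assumes M: "M \<le> n"
  shows "SB_op U M N j (vec n (\<lambda>i. \<Sum>m<M. c m * U $$ (i,m))) =
    vec n (\<lambda>i. if i \<in> j ` {..<N} then (\<Sum>m<M. c m * U $$ (i,m)) else 0)"
  unfolding SB_op_def bl_proj_id[OF M] sampling_op_def by (intro eq_vecI) auto

lemma SB_bound:
  assumes M: "M \<le> n" and norming: "norming_set U M N j" and b: "b \<in> bandlimited U M"
  shows "0 \<le> SB_inv_norm U M N j \<and> vnorm b \<le> SB_inv_norm U M N j * vnorm (SB_op U M N j b)"
proof -
  let ?T = "SB_op U M N j" and ?B = "bandlimited U M"
  define a where "a k i = (if i \<in> j ` {..<N} then U $$ (i,k) else 0)" for k i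
  have inj: "inj_on ?T ?B" using norming unfolding norming_set_def .
  have z_eq: "0\<^sub>v n = vec n (\<lambda>i. \<Sum>m<M. (\<lambda>_. 0) m * U $$ (i,m))" by (intro eq_vecI) auto
  have zB: "0\<^sub>v n \<in> ?B"
    unfolding bandlimited_def dU(1) by (subst z_eq) (auto intro!: exI[of _ "\<lambda>_. 0"])
  have T0: "?T (0\<^sub>v n) = 0\<^sub>v n"
    by (subst z_eq, subst SB_op_bl[OF M]) (intro eq_vecI, auto)
  have indep: "\<forall>k<M. c k = 0" if h: "\<forall>i<n. (\<Sum>k<M. c k * a k i) = 0" for c
  proof -
    define bc where "bc = vec n (\<lambda>i. \<Sum>m<M. c m * U $$ (i,m))"
    have bcB: "bc \<in> ?B" unfolding bandlimited_def bc_def by auto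
    have "?T bc = 0\<^sub>v n"
      unfolding bc_def SB_op_bl[OF M]
    proof (intro eq_vecI)
      fix i assume "i < dim_vec (0\<^sub>v n :: real vec)"
      then have i: "i < n" by simp
      show "vec n (\<lambda>i. if i \<in> j ` {..<N} then \<Sum>m<M. c m * U $$ (i, m) else 0) $ i = 0\<^sub>v n $ i"
        using h[rule_format, OF i] i by (auto simp: a_def)
    qed simp
    then have bc0: "bc = 0\<^sub>v n" using inj bcB zB T0 unfolding inj_on_def by metis
    have "c k = 0" if k: "k < M" for k
    proof -
      have "c k = hat (\<lambda>i. \<Sum>m<M. c m * U $$ (i,m)) k" using bl_hat[OF M, of k c] k M by simp
      also have "\<dots> = hat (\<lambda>_. 0) k"
      proof (rule hat_cong)
        fix i assume i: "i < n"
        have "bc $ i = (\<Sum>m<M. c m * U $$ (i,m))" using i by (simp add: bc_def)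
        then show "(\<Sum>m<M. c m * U $$ (i,m)) = 0" using bc0 i by simp
      qed
      also have "\<dots> = 0" by (simp add: hat_def)
      finally show ?thesis .
    qed
    then show ?thesis by blast
  qed
  obtain C0 where C0: "C0 \<ge> 0" "\<And>c. (\<Sum>k<M. (c k)\<^sup>2) \<le> C0 * (\<Sum>i<n. (\<Sum>k<M. c k * a k i)\<^sup>2)"
    using lin_indep_bound[where a=a and n=n and M=M] indep by blast
  have bnd: "vnorm b' \<le> sqrt C0 * vnorm (?T b')" if b': "b' \<in> ?B" for b'
  proof -
    obtain c where c: "b' = vec n (\<lambda>i. \<Sum>m<M. c m * U $$ (i,m))"
      using b' unfolding bandlimited_def by auto
    have n1: "(\<Sum>i<n. (\<Sum>m<M. c m * U $$ (i,m))\<^sup>2) = (\<Sum>k<M. (c k)\<^sup>2)"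
    proof -
      have "(\<Sum>i<n. (\<Sum>m<M. c m * U $$ (i,m))\<^sup>2) = (\<Sum>i<n. (\<Sum>m<M. c m * U $$ (i,m)) * (\<Sum>m<M. c m * U $$ (i,m)))"
        by (simp add: power2_eq_square)
      also have "\<dots> = (\<Sum>k<n. (hat (\<lambda>i. \<Sum>m<M. c m * U $$ (i,m)) k) * (hat (\<lambda>i. \<Sum>m<M. c m * U $$ (i,m)) k))"
        by (rule parseval)
      also have "\<dots> = (\<Sum>k<n. if k < M then (c k)\<^sup>2 else 0)"
        using bl_hat[OF M] by (intro sum.cong) (auto simp: power2_eq_square)
      also have "\<dots> = (\<Sum>k<M. (c k)\<^sup>2)" by (rule sum_if_less[OF M])
      finally show ?thesis .
    qed
    have n2: "(\<Sum>i<n. (if i \<in> j ` {..<N} then (\<Sum>m<M. c m * U $$ (i,m)) else 0)\<^sup>2) = (\<Sum>i<n. (\<Sum>k<M. c k * a k i)\<^sup>2)"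
      by (intro sum.cong) (auto simp: a_def)
    have "vnorm b' = sqrt (\<Sum>k<M. (c k)\<^sup>2)"
      unfolding c vnorm_vec n1 ..
    also have "\<dots> \<le> sqrt (C0 * (\<Sum>i<n. (\<Sum>k<M. c k * a k i)\<^sup>2))"
      using C0(2) by simp
    also have "\<dots> = sqrt C0 * vnorm (?T b')"
      unfolding c SB_op_bl[OF M] vnorm_vec n2 by (simp add: real_sqrt_mult)
    finally show ?thesis .
  qed
  define S where "S = {vnorm (inv_into ?B ?T z) / vnorm z | z. z \<in> ?T ` ?B \<and> z \<noteq> 0\<^sub>v (dim_row U)}"
  have SB_eq: "SB_inv_norm U M N j = Sup (insert 0 S)"
    unfolding SB_inv_norm_def S_def Let_def ..
  have Tcar: "?T b' \<in> carrier_vec n" for b'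
    by (simp add: SB_op_def sampling_op_def bl_proj_def)
  have Sb: "s \<le> sqrt C0" if "s \<in> S" for s
  proof -
    obtain b' where b': "b' \<in> ?B" and s: "s = vnorm b' / vnorm (?T b')" and nz: "?T b' \<noteq> 0\<^sub>v n"
      using \<open>s \<in> S\<close> inv_into_f_f[OF inj] unfolding S_def by auto
    have "vnorm (?T b') > 0" using vnorm_pos[OF Tcar nz] .
    then show ?thesis using bnd[OF b'] s by (simp add: divide_le_eq mult.commute)
  qed
  have bdd: "bdd_above (insert 0 S)"
    using Sb C0(1) by (intro bdd_aboveI[of _ "sqrt C0"]) auto
  have pos: "0 \<le> Sup (insert 0 S)" by (rule cSup_upper[OF _ bdd]) simp
  have "vnorm b \<le> Sup (insert 0 S) * vnorm (?T b)"
  proof (cases "?T b = 0\<^sub>v n")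
    case True
    then have "b = 0\<^sub>v n" using inj b zB T0 unfolding inj_on_def by metis
    then show ?thesis using True by (simp add: vnorm_def)
  next
    case False
    have "vnorm b / vnorm (?T b) \<in> S"
      unfolding S_def using b False inv_into_f_f[OF inj b]
      by (intro CollectI exI[of _ "?T b"]) auto
    then have "vnorm b / vnorm (?T b) \<le> Sup (insert 0 S)" using bdd by (intro cSup_upper) auto
    moreover have "vnorm (?T b) > 0" using vnorm_pos[OF Tcar False] .
    ultimately show ?thesis by (simp add: divide_le_eq mult.commute)
  qed
  then show ?thesis using pos SB_eq by simp
qed

end
theorem corollary3:
  fixes n M N :: nat and A U :: "real mat" and lam :: "nat \<Rightarrow> real"
    and f :: "real vec" and j :: "nat \<Rightarrow> nat" and mu :: "nat \<Rightarrow> real"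
  assumes A_carrier: "A \<in> carrier_mat n n"
    and A_sym: "transpose_mat A = A"
    and A_nonneg: "\<forall>i<n. \<forall>k<n. A $$ (i, k) \<ge> 0"
    and deg_pos: "\<forall>i<n. Defs.degree A i > 0"
    and U_carrier: "U \<in> carrier_mat n n"
    and U_orth: "transpose_mat U * U = 1\<^sub>m n"
    and eigen: "norm_laplacian A = U * diag_of n lam * transpose_mat U"
    and f_carrier: "f \<in> carrier_vec n"
    and f_pd: "pos_def_fun U f"
    and M_le: "M \<le> n"
    and j_range: "\<forall>k<N. j k < n"
    and j_inj: "inj_on j {..<N}"
    and norming: "norming_set U M N j"
    and exact: "\<forall>y \<in> native_span U f N j.
                  (1 / real n) * (\<Sum>i<n. y $ i) = (\<Sum>k<N. mu k * y $ j k)"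
  shows "\<forall>x \<in> carrier_vec n.
           \<bar>(1 / real n) * (\<Sum>i<n. x $ i) - (\<Sum>k<N. mu k * x $ j k)\<bar>
             \<le> (1 + SB_inv_norm U M N j) * sqrt (\<Sum>k\<in>{M..<n}. gft U f $ k) * native_norm U f x"
proof (intro ballI)
  fix x :: "real vec" assume x: "x \<in> carrier_vec n"
  interpret orthU n U using U_carrier U_orth by unfold_locales
  define fh where "fh = hat (\<lambda>i. f $ i)"
  have K: "kernel_mat U f = Mg fh" unfolding fh_def by (rule kernel_Mg[OF f_carrier])
  have fh_pos: "fh k > 0" if k: "k < n" for k
  proof -
    define v where "v = col U k"
    have v: "v \<in> carrier_vec n" unfolding v_def using col_dim[of U k] by simp
    have vh: "hat (\<lambda>l. v $ l) m = (if m = k then 1 else 0)" if m: "m < n" for m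
    proof -
      have "hat (\<lambda>l. v $ l) m = (\<Sum>i<n. U $$ (i,m) * U $$ (i,k))"
        unfolding hat_def v_def using k by (intro sum.cong) auto
      also have "\<dots> = (if m = k then 1 else 0)" by (rule orth_sum[OF m k])
      finally show ?thesis .
    qed
    have nz: "v \<noteq> 0\<^sub>v n"
    proof
      assume v0: "v = 0\<^sub>v n"
      have "hat (\<lambda>l. v $ l) k = hat (\<lambda>_. 0) k" by (rule hat_cong) (simp add: v0)
      also have "\<dots> = 0" by (simp add: hat_def)
      finally show False using vh[OF k] by simp
    qed
    have "v \<bullet> (kernel_mat U f *\<^sub>v v) > 0"
      using f_pd v nz unfolding pos_def_fun_def pos_def_mat_def dU by blast
    also have "v \<bullet> (kernel_mat U f *\<^sub>v v) = (\<Sum>m<n. fh m * (hat (\<lambda>l. v $ l) m)\<^sup>2)"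
      unfolding K by (rule Mg_quad[OF v])
    also have "\<dots> = (\<Sum>m<n. if m = k then fh m else 0)"
      using vh by (intro sum.cong) auto
    also have "\<dots> = fh k" using k by simp
    finally show ?thesis .
  qed
  have Kinv: "mat_inv n (Mg fh) = Mg (\<lambda>k. 1 / fh k)"
    by (rule mat_inv_Mg) (use fh_pos in force)
  define xh where "xh = hat (\<lambda>i. x $ i)"
  define X where "X = (\<Sum>k<n. (xh k)\<^sup>2 / fh k)"
  have nn: "native_norm U f x = sqrt X"
  proof -
    have "x \<bullet> (Mg (\<lambda>k. 1 / fh k) *\<^sub>v x) = (\<Sum>k<n. 1 / fh k * (xh k)\<^sup>2)"
      unfolding xh_def by (rule Mg_quad[OF x])
    also have "\<dots> = X" unfolding X_def by simp
    finally show ?thesis unfolding native_norm_def dU K Kinv by simp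
  qed
  define eps where "eps i = 1 / real n - (\<Sum>k<N. if j k = i then mu k else 0)" for i
  have Eid: "(1 / real n) * (\<Sum>i<n. z i) - (\<Sum>k<N. mu k * z (j k)) = (\<Sum>i<n. eps i * z i)" for z
  proof -
    have "(\<Sum>i<n. (\<Sum>k<N. if j k = i then mu k else 0) * z i) = (\<Sum>i<n. \<Sum>k<N. if j k = i then mu k * z i else 0)"
      unfolding sum_distrib_right by (intro sum.cong refl) simp
    also have "\<dots> = (\<Sum>k<N. \<Sum>i<n. if j k = i then mu k * z i else 0)" by (rule sum.swap)
    also have "\<dots> = (\<Sum>k<N. mu k * z (j k))"
      using j_range by (intro sum.cong refl) simp
    finally have e: "(\<Sum>i<n. (\<Sum>k<N. if j k = i then mu k else 0) * z i) = (\<Sum>k<N. mu k * z (j k))" .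
    have "(\<Sum>i<n. eps i * z i) = (\<Sum>i<n. 1 / real n * z i) - (\<Sum>i<n. (\<Sum>k<N. if j k = i then mu k else 0) * z i)"
      unfolding eps_def left_diff_distrib sum_subtractf ..
    also have "(\<Sum>i<n. 1 / real n * z i) = (1 / real n) * (\<Sum>i<n. z i)" by (simp add: sum_distrib_left)
    finally show ?thesis using e by simp
  qed
  define eh where "eh = hat eps"
  define r where "r i = (\<Sum>k<n. U $$ (i,k) * (fh k * eh k))" for i
  have rh: "hat r k = fh k * eh k" if "k < n" for k
    by (rule hat_synth[OF _ that]) (simp add: r_def)
  have rW: "r (j m) = 0" if m: "m < N" for m
  proof -
    define jm where "jm = j m"
    have jm: "jm < n" using j_range m by (simp add: jm_def)
    define yf where "yf i = (\<Sum>k<n. U $$ (i,k) * (U $$ (jm,k) * fh k))" for i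
    define c :: "nat \<Rightarrow> real" where "c k = (if k = m then 1 else 0)" for k
    define y where "y = vec (dim_row U) (\<lambda>i. \<Sum>k<N. c k * (conv_op U (unit_vec (dim_row U) (j k)) *\<^sub>v f) $ i)"
    have yN: "y \<in> native_span U f N j" unfolding native_span_def y_def by blast
    have yi: "y $ i = yf i" if i: "i < n" for i
    proof -
      have "y $ i = (\<Sum>k<N. c k * (conv_op U (unit_vec n (j k)) *\<^sub>v f) $ i)" using i by (simp add: y_def)
      also have "\<dots> = (conv_op U (unit_vec n jm) *\<^sub>v f) $ i"
      proof -
        have "(\<Sum>k<N. c k * (conv_op U (unit_vec n (j k)) *\<^sub>v f) $ i) =
              (\<Sum>k<N. if k = m then (conv_op U (unit_vec n (j k)) *\<^sub>v f) $ i else 0)"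
          by (intro sum.cong) (auto simp: c_def)
        then show ?thesis using m by (simp add: jm_def)
      qed
      also have "\<dots> = kernel_mat U f $$ (i, jm)" using i jm by (simp add: kernel_mat_def)
      also have "\<dots> = Mg fh $$ (i, jm)" using K by simp
      also have "\<dots> = yf i" using i jm by (simp add: Mg_def yf_def mult_ac)
      finally show ?thesis .
    qed
    have e0: "(1 / real n) * (\<Sum>i<n. y $ i) = (\<Sum>k<N. mu k * y $ j k)" using exact yN by blast
    have e1: "(\<Sum>i<n. y $ i) = (\<Sum>i<n. yf i)" using yi by (intro sum.cong) auto
    have e2: "(\<Sum>k<N. mu k * y $ j k) = (\<Sum>k<N. mu k * yf (j k))" using yi j_range by (intro sum.cong) auto
    have "(\<Sum>i<n. eps i * yf i) = 0" using Eid[of yf] e0 e1 e2 by simp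
    moreover have "(\<Sum>i<n. eps i * yf i) = (\<Sum>k<n. eh k * hat yf k)" unfolding eh_def by (rule parseval)
    moreover have "hat yf k = U $$ (jm,k) * fh k" if "k < n" for k
      by (rule hat_synth[OF _ that]) (simp add: yf_def)
    ultimately have "(\<Sum>k<n. eh k * (U $$ (jm,k) * fh k)) = 0"
      by (metis (no_types, lifting) lessThan_iff sum.cong)
    moreover have "r jm = (\<Sum>k<n. eh k * (U $$ (jm,k) * fh k))"
      unfolding r_def by (intro sum.cong) (simp_all add: mult_ac)
    ultimately show ?thesis by (simp add: jm_def)
  qed
  define R where "R = (\<Sum>k<n. fh k * (eh k)\<^sup>2)"
  have R0: "R \<ge> 0" unfolding R_def using fh_pos by (intro sum_nonneg) (simp add: less_imp_le)
  have Ex: "(1 / real n) * (\<Sum>i<n. x $ i) - (\<Sum>k<N. mu k * x $ j k) = (\<Sum>k<n. eh k * xh k)"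
    using Eid[of "\<lambda>i. x $ i"] parseval[of eps "\<lambda>i. x $ i"] by (simp add: eh_def xh_def)
  have CS: "\<bar>\<Sum>k<n. eh k * xh k\<bar> \<le> sqrt R * sqrt X"
  proof -
    have sp: "sqrt (fh k) > 0" if "k < n" for k using fh_pos[OF that] by simp
    have "(\<Sum>k<n. eh k * xh k) = (\<Sum>k<n. (eh k * sqrt (fh k)) * (xh k / sqrt (fh k)))"
    proof (intro sum.cong refl)
      fix k assume "k \<in> {..<n}"
      then have "sqrt (fh k) \<noteq> 0" using sp by force
      then show "eh k * xh k = (eh k * sqrt (fh k)) * (xh k / sqrt (fh k))" by simp
    qed
    then have "(\<Sum>k<n. eh k * xh k)\<^sup>2 \<le> (\<Sum>k<n. (eh k * sqrt (fh k))\<^sup>2) * (\<Sum>k<n. (xh k / sqrt (fh k))\<^sup>2)"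
      using my_CS[of "\<lambda>k. eh k * sqrt (fh k)" "\<lambda>k. xh k / sqrt (fh k)" "{..<n}"] by simp
    also have "(\<Sum>k<n. (eh k * sqrt (fh k))\<^sup>2) = R"
      unfolding R_def using fh_pos by (intro sum.cong) (auto simp: power_mult_distrib less_imp_le)
    also have "(\<Sum>k<n. (xh k / sqrt (fh k))\<^sup>2) = X"
      unfolding X_def using fh_pos by (intro sum.cong) (auto simp: power_divide less_imp_le)
    finally have "(\<Sum>k<n. eh k * xh k)\<^sup>2 \<le> R * X" .
    then have "sqrt ((\<Sum>k<n. eh k * xh k)\<^sup>2) \<le> sqrt (R * X)" by (rule real_sqrt_le_mono)
    then show ?thesis by (simp add: real_sqrt_mult)
  qed
  have RE: "R = (1 / real n) * (\<Sum>i<n. r i)"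
  proof -
    have "R = (\<Sum>k<n. eh k * hat r k)" unfolding R_def using rh by (intro sum.cong) (auto simp: power2_eq_square)
    also have "\<dots> = (\<Sum>i<n. eps i * r i)" unfolding eh_def by (rule parseval[symmetric])
    also have "\<dots> = (1 / real n) * (\<Sum>i<n. r i) - (\<Sum>k<N. mu k * r (j k))" by (rule Eid[symmetric])
    also have "(\<Sum>k<N. mu k * r (j k)) = 0" using rW by simp
    finally show ?thesis by simp
  qed
  define T where "T = (\<Sum>k\<in>{M..<n}. fh k)"
  have T0: "T \<ge> 0" unfolding T_def using fh_pos by (intro sum_nonneg) (simp add: less_imp_le)
  have gftT: "(\<Sum>k\<in>{M..<n}. gft U f $ k) = T"
    unfolding T_def fh_def hat_def using f_carrier
    by (intro sum.cong refl) (simp add: gft_def scalar_prod_def lessThan_atLeast0)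
  define C where "C = SB_inv_norm U M N j"
  define rhat where "rhat = hat r"
  define P where "P i = (\<Sum>k<M. rhat k * U $$ (i,k))" for i
  define Q where "Q i = (\<Sum>k\<in>{M..<n}. rhat k * U $$ (i,k))" for i
  have split: "(\<Sum>k<n. g k) = (\<Sum>k<M. g k) + (\<Sum>k\<in>{M..<n}. g k)" for g :: "nat \<Rightarrow> real"
  proof -
    have "{..<n} = {..<M} \<union> {M..<n}" using M_le by auto
    moreover have "{..<M} \<inter> {M..<n} = {}" by auto
    ultimately show ?thesis by (metis finite_lessThan finite_atLeastLessThan sum.union_disjoint)
  qed
  have rPQ: "r i = P i + Q i" if i: "i < n" for i
  proof -
    have "r i = (\<Sum>k<n. rhat k * U $$ (i,k))" using inversion[OF i, of r] by (simp add: rhat_def mult_ac)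
    then show ?thesis unfolding P_def Q_def using split by simp
  qed
  have nr: "(\<Sum>i<n. (r i)\<^sup>2) = (\<Sum>k<M. (rhat k)\<^sup>2) + (\<Sum>k\<in>{M..<n}. (rhat k)\<^sup>2)"
    using parseval[of r r] split by (simp add: rhat_def power2_eq_square)
  have nP: "(\<Sum>i<n. (P i)\<^sup>2) = (\<Sum>k<M. (rhat k)\<^sup>2)"
  proof -
    have "(\<Sum>i<n. (P i)\<^sup>2) = (\<Sum>k<n. hat P k * hat P k)" using parseval[of P P] by (simp add: power2_eq_square)
    also have "\<dots> = (\<Sum>k<n. if k < M then (rhat k)\<^sup>2 else 0)"
      unfolding P_def using bl_hat[OF M_le] by (intro sum.cong) (auto simp: power2_eq_square)
    also have "\<dots> = (\<Sum>k<M. (rhat k)\<^sup>2)" by (rule sum_if_less[OF M_le])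
    finally show ?thesis .
  qed
  have nQ: "(\<Sum>i<n. (Q i)\<^sup>2) = (\<Sum>k\<in>{M..<n}. (rhat k)\<^sup>2)"
  proof -
    have hQ: "hat Q k = (if M \<le> k then rhat k else 0)" if k: "k < n" for k
    proof (rule hat_synth[OF _ k], intro allI impI)
      fix i assume "i < n"
      have "(\<Sum>m<n. U $$ (i,m) * (if M \<le> m then rhat m else 0)) = (\<Sum>m<n. if M \<le> m then rhat m * U $$ (i,m) else 0)"
        by (intro sum.cong) auto
      also have "\<dots> = Q i" unfolding Q_def by (rule sum_if_ge)
      finally show "Q i = (\<Sum>m<n. U $$ (i,m) * (if M \<le> m then rhat m else 0))" by simp
    qed
    have "(\<Sum>i<n. (Q i)\<^sup>2) = (\<Sum>k<n. hat Q k * hat Q k)" using parseval[of Q Q] by (simp add: power2_eq_square)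
    also have "\<dots> = (\<Sum>k<n. if M \<le> k then (rhat k)\<^sup>2 else 0)"
      using hQ by (intro sum.cong) (auto simp: power2_eq_square)
    also have "\<dots> = (\<Sum>k\<in>{M..<n}. (rhat k)\<^sup>2)" by (rule sum_if_ge)
    finally show ?thesis .
  qed
  have QT: "(\<Sum>k\<in>{M..<n}. (rhat k)\<^sup>2) \<le> T * R"
  proof -
    have "(\<Sum>k\<in>{M..<n}. (rhat k)\<^sup>2) = (\<Sum>k\<in>{M..<n}. fh k * (fh k * (eh k)\<^sup>2))"
      using rh by (intro sum.cong) (auto simp: rhat_def power2_eq_square)
    also have "\<dots> \<le> (\<Sum>k\<in>{M..<n}. T * (fh k * (eh k)\<^sup>2))"
    proof (rule sum_mono)
      fix k assume k: "k \<in> {M..<n}"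
      have "fh k \<le> T" unfolding T_def
        by (rule member_le_sum[OF k]) (use fh_pos in \<open>auto simp: less_imp_le\<close>)
      moreover have "0 \<le> fh k * (eh k)\<^sup>2" using fh_pos k by (simp add: less_imp_le)
      ultimately show "fh k * (fh k * (eh k)\<^sup>2) \<le> T * (fh k * (eh k)\<^sup>2)" by (rule mult_right_mono)
    qed
    also have "\<dots> = T * (\<Sum>k\<in>{M..<n}. fh k * (eh k)\<^sup>2)" by (simp add: sum_distrib_left)
    also have "(\<Sum>k\<in>{M..<n}. fh k * (eh k)\<^sup>2) \<le> R"
      unfolding R_def by (rule sum_mono2) (use fh_pos in \<open>auto simp: less_imp_le\<close>)
    then have "T * (\<Sum>k\<in>{M..<n}. fh k * (eh k)\<^sup>2) \<le> T * R" using T0 by (rule mult_left_mono)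
    finally show ?thesis .
  qed
  have PC: "sqrt (\<Sum>i<n. (P i)\<^sup>2) \<le> C * sqrt (\<Sum>i<n. (Q i)\<^sup>2)" and C0: "C \<ge> 0"
  proof -
    define Pv where "Pv = vec n (\<lambda>i. \<Sum>m<M. rhat m * U $$ (i,m))"
    have PvB: "Pv \<in> bandlimited U M" unfolding bandlimited_def Pv_def dU by blast
    from SB_bound[OF M_le norming PvB]
    have C0: "0 \<le> C" and b: "vnorm Pv \<le> C * vnorm (SB_op U M N j Pv)" unfolding C_def by auto
    have v1: "vnorm Pv = sqrt (\<Sum>i<n. (P i)\<^sup>2)" unfolding Pv_def vnorm_vec P_def ..
    have v2: "vnorm (SB_op U M N j Pv) = sqrt (\<Sum>i<n. (if i \<in> j ` {..<N} then P i else 0)\<^sup>2)"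
      unfolding Pv_def SB_op_bl[OF M_le] vnorm_vec P_def ..
    have "(\<Sum>i<n. (if i \<in> j ` {..<N} then P i else 0)\<^sup>2) \<le> (\<Sum>i<n. (Q i)\<^sup>2)"
    proof (rule sum_mono)
      fix i assume i: "i \<in> {..<n}"
      show "(if i \<in> j ` {..<N} then P i else 0)\<^sup>2 \<le> (Q i)\<^sup>2"
      proof (cases "i \<in> j ` {..<N}")
        case True
        then obtain m where "m < N" "i = j m" by auto
        then have "r i = 0" using rW by simp
        then have "P i = - Q i" using rPQ i by force
        then show ?thesis using True by simp
      qed simp
    qed
    then have "vnorm (SB_op U M N j Pv) \<le> sqrt (\<Sum>i<n. (Q i)\<^sup>2)" unfolding v2 by (rule real_sqrt_le_mono)
    then have "C * vnorm (SB_op U M N j Pv) \<le> C * sqrt (\<Sum>i<n. (Q i)\<^sup>2)" using C0 by (rule mult_left_mono)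
    with b v1 show "sqrt (\<Sum>i<n. (P i)\<^sup>2) \<le> C * sqrt (\<Sum>i<n. (Q i)\<^sup>2)" by simp
    show "C \<ge> 0" by (rule C0)
  qed
  have nrb: "sqrt (\<Sum>i<n. (r i)\<^sup>2) \<le> (1 + C) * sqrt T * sqrt R"
  proof -
    define p where "p = sqrt (\<Sum>i<n. (P i)\<^sup>2)"
    define q where "q = sqrt (\<Sum>i<n. (Q i)\<^sup>2)"
    have p0: "p \<ge> 0" and q0: "q \<ge> 0" unfolding p_def q_def by (simp_all add: sum_nonneg)
    have "(\<Sum>i<n. (r i)\<^sup>2) = p\<^sup>2 + q\<^sup>2"
      unfolding p_def q_def nr nP[symmetric] nQ[symmetric] by (simp add: sum_nonneg)
    also have "\<dots> \<le> (C * q)\<^sup>2 + q\<^sup>2"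
      using PC p0 unfolding p_def[symmetric] q_def[symmetric] by (simp add: power_mono)
    also have "\<dots> \<le> ((1 + C) * q)\<^sup>2" using C0 q0 by (simp add: power2_eq_square algebra_simps)
    finally have "sqrt (\<Sum>i<n. (r i)\<^sup>2) \<le> (1 + C) * q"
      using C0 q0 by (intro real_le_lsqrt) simp_all
    also have "q \<le> sqrt T * sqrt R"
      unfolding q_def nQ real_sqrt_mult[symmetric] using QT by (rule real_sqrt_le_mono)
    then have "(1 + C) * q \<le> (1 + C) * (sqrt T * sqrt R)" using C0 by (intro mult_left_mono) simp_all
    finally show ?thesis by (simp add: mult_ac)
  qed
  have Rle: "R \<le> sqrt (\<Sum>i<n. (r i)\<^sup>2)"
  proof (cases "n = 0")
    case True then show ?thesis using RE by simp
  next
    case False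
    then have n1: "real n \<ge> 1" by simp
    have "(\<Sum>i<n. 1 * r i)\<^sup>2 \<le> (\<Sum>i<n. (1::real)\<^sup>2) * (\<Sum>i<n. (r i)\<^sup>2)" by (rule my_CS)
    then have "(\<Sum>i<n. r i)\<^sup>2 \<le> real n * (\<Sum>i<n. (r i)\<^sup>2)" by simp
    then have "sqrt ((\<Sum>i<n. r i)\<^sup>2) \<le> sqrt (real n * (\<Sum>i<n. (r i)\<^sup>2))" by (rule real_sqrt_le_mono)
    then have a: "\<bar>\<Sum>i<n. r i\<bar> \<le> sqrt (real n) * sqrt (\<Sum>i<n. (r i)\<^sup>2)" by (simp add: real_sqrt_mult)
    have sn: "sqrt (real n) \<le> real n"
      using n1 by (intro real_le_lsqrt) (simp_all add: power2_eq_square)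
    have s0: "sqrt (\<Sum>i<n. (r i)\<^sup>2) \<ge> 0" by (simp add: sum_nonneg)
    have "(\<Sum>i<n. r i) \<le> real n * sqrt (\<Sum>i<n. (r i)\<^sup>2)"
      using a mult_right_mono[OF sn s0] by linarith
    then show ?thesis unfolding RE using n1 by (simp add: field_simps)
  qed
  have sR: "sqrt R \<le> (1 + C) * sqrt T"
  proof (cases "R = 0")
    case True then show ?thesis using C0 T0 by simp
  next
    case False
    then have sRp: "sqrt R > 0" using R0 by simp
    have "sqrt R * sqrt R \<le> ((1 + C) * sqrt T) * sqrt R" using Rle nrb R0 by simp
    then show ?thesis using mult_le_cancel_right_pos[OF sRp, of "sqrt R" "(1 + C) * sqrt T"] by blast
  qed
  have "\<bar>(1 / real n) * (\<Sum>i<n. x $ i) - (\<Sum>k<N. mu k * x $ j k)\<bar> \<le> sqrt R * sqrt X"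
    unfolding Ex by (rule CS)
  also have "\<dots> \<le> (1 + C) * sqrt T * sqrt X" using sR
  proof (rule mult_right_mono)
    have "X \<ge> 0" unfolding X_def using fh_pos by (intro sum_nonneg) (simp add: less_imp_le)
    then show "0 \<le> sqrt X" by simp
  qed
  finally show "\<bar>(1 / real n) * (\<Sum>i<n. x $ i) - (\<Sum>k<N. mu k * x $ j k)\<bar>
             \<le> (1 + SB_inv_norm U M N j) * sqrt (\<Sum>k\<in>{M..<n}. gft U f $ k) * native_norm U f x"
    unfolding gftT nn C_def .
qed

end
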